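(* For all $m\geq 1$ and $n\in\mathbb N$, \[ s_{n,m}(122,132)=\frac{1}{mn+1}\binom{(m+1)n}{n}. \]
   Context: $[n]_m=\{1^m,\ldots,n^m\}$; a permutation of $[n]_m$ is a sequence of length $nm$ in which each element of $[n]$ appears exactly $m$ times. A sequence avoids a pattern $\pi$ if it has no subsequence order-isomorphic to $\pi$ (same relative order and same equalities among entries). $s_{n,m}(\Pi)$ is the number of permutations of $[n]_m$ avoiding all patterns in $\Pi$. *)

theory Defs
  imports Complex_Main "HOL-Library.Sublist"
begin

definition order_iso :: "nat list \<Rightarrow> nat list \<Rightarrow> bool" where
  "order_iso u v \<longleftrightarrow> length u = length v \<and>
     (\<forall>i < length u. \<forall>j < length u. (u ! i < u ! j \<longleftrightarrow> v ! i < v ! j))"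

definition contains_pattern :: "nat list \<Rightarrow> nat list \<Rightarrow> bool" where
  "contains_pattern w p \<longleftrightarrow> (\<exists>u. subseq u w \<and> order_iso u p)"

definition avoids_all :: "nat list \<Rightarrow> nat list set \<Rightarrow> bool" where
  "avoids_all w P \<longleftrightarrow> (\<forall>p\<in>P. \<not> contains_pattern w p)"

definition multiperms :: "nat \<Rightarrow> nat \<Rightarrow> nat list set" where
  "multiperms n m = {w. length w = n * m \<and> set w \<subseteq> {1..n} \<and>
                        (\<forall>i\<in>{1..n}. count_list w i = m)}"

definition s_count :: "nat \<Rightarrow> nat \<Rightarrow> nat list set \<Rightarrow> nat" where
  "s_count n m P = card {w \<in> multiperms n m. avoids_all w P}"

end

theory Submission
  imports Defs
begin


definition bad :: "nat \<Rightarrow> nat \<Rightarrow> nat \<Rightarrow> bool" where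
  "bad a b c \<longleftrightarrow> (a < b \<and> b = c) \<or> (a < c \<and> c < b)"

definition av :: "nat list \<Rightarrow> bool" where
  "av w \<longleftrightarrow> (\<forall>a b c. subseq [a,b,c] w \<longrightarrow> \<not> bad a b c)"

lemma order_iso3: "order_iso [a,b,c] [x,y,z] \<longleftrightarrow>
  ((a<b) = (x<y)) \<and> ((a<c) = (x<z)) \<and> ((b<a) = (y<x)) \<and> ((b<c) = (y<z)) \<and> ((c<a) = (z<x)) \<and> ((c<b) = (z<y))"
  unfolding order_iso_def by (auto simp: less_Suc_eq numeral_eq_Suc)

lemma contains3: "contains_pattern w [x,y,z] \<longleftrightarrow> (\<exists>a b c. subseq [a,b,c] w \<and> order_iso [a,b,c] [x,y,z])"
proof
  assume "contains_pattern w [x,y,z]"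
  then obtain u where u: "subseq u w" "order_iso u [x,y,z]" unfolding contains_pattern_def by blast
  then have "length u = 3" unfolding order_iso_def by simp
  then obtain a b c where "u = [a,b,c]" by (auto simp: numeral_eq_Suc length_Suc_conv)
  then show "\<exists>a b c. subseq [a,b,c] w \<and> order_iso [a,b,c] [x,y,z]" using u by blast
qed (auto simp: contains_pattern_def)

lemma av_iff: "avoids_all w {[1,2,2],[1,3,2]} \<longleftrightarrow> av w"
  unfolding avoids_all_def av_def bad_def
  apply (auto simp: contains3 order_iso3)
  apply (meson less_trans less_not_sym)
  by (metis linorder_neqE_nat)


lemma av_subseq: "subseq v w \<Longrightarrow> av w \<Longrightarrow> av v"
  unfolding av_def using subseq_order.order_trans by blast

lemma subseq_map_inv: "subseq xs (map f ys) \<Longrightarrow> \<exists>zs. subseq zs ys \<and> xs = map f zs"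
proof (induction ys arbitrary: xs)
  case Nil then show ?case by auto
next
  case (Cons y ys)
  show ?case
  proof (cases xs)
    case Nil then show ?thesis by auto
  next
    case (Cons x xs')
    show ?thesis
    proof (cases "x = f y")
      case True
      with Cons.prems Cons have "subseq xs' (map f ys)" by simp
      then obtain zs where "subseq zs ys" "xs' = map f zs" using Cons.IH by blast
      then show ?thesis using Cons True by (intro exI[of _ "y#zs"]) auto
    next
      case False
      with Cons.prems Cons have "subseq xs (map f ys)" by simp
      then obtain zs where "subseq zs ys" "xs = map f zs" using Cons.IH by blast
      then show ?thesis by (intro exI[of _ zs]) auto
    qed
  qed
qed

lemma bad_pred: "bad (a-1) (b-1) (c-1) \<Longrightarrow> bad a b c"
  unfolding bad_def by presburger

lemma bad_unpred: "bad a b c \<Longrightarrow> (a = 0 \<longrightarrow> b \<noteq> 1 \<and> c \<noteq> 1) \<Longrightarrow> bad (a-1) (b-1) (c-1)"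
  unfolding bad_def by presburger

lemma map3: "[a,b,c] = map f zs \<Longrightarrow> \<exists>a' b' c'. zs = [a',b',c'] \<and> a = f a' \<and> b = f b' \<and> c = f c'"
  by (cases zs rule: list.exhaust; simp; rename_tac z zs'; case_tac zs'; simp; rename_tac z2 zs2; case_tac zs2; simp)


lemma av_map_pred: "av w \<Longrightarrow> av (map (\<lambda>x. x - 1) w)"
  unfolding av_def
proof (intro allI impI)
  fix a b c
  assume H: "\<forall>a b c. subseq [a, b, c] w \<longrightarrow> \<not> bad a b c" and S: "subseq [a, b, c] (map (\<lambda>x. x - 1) w)"
  from subseq_map_inv[OF S] obtain zs where Z: "subseq zs w" "[a,b,c] = map (\<lambda>x. x - 1) zs" by metis
  from map3[OF Z(2)] obtain a' b' c' where Z2: "zs = [a',b',c']" "a = a' - 1" "b = b' - 1" "c = c' - 1"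
    by metis
  from Z(1) Z2(1) have "subseq [a',b',c'] w" by simp
  with H have "\<not> bad a' b' c'" by simp
  then show "\<not> bad a b c" using bad_pred[of a' b' c'] unfolding Z2(2-4) by blast
qed

lemma av_unmap: "av (map (\<lambda>x. x - 1) w) \<Longrightarrow> \<not> subseq [0,1] w \<Longrightarrow> av w"
  unfolding av_def
proof (intro allI impI)
  fix a b c
  assume H: "\<forall>a b c. subseq [a, b, c] (map (\<lambda>x. x - 1) w) \<longrightarrow> \<not> bad a b c"
    and N: "\<not> subseq [0,1] w" and S: "subseq [a, b, c] w"
  have "subseq [a-1,b-1,c-1] (map (\<lambda>x. x - 1) w)" using subseq_map[OF S, of "\<lambda>x. x - 1"] by simp
  with H have nb: "\<not> bad (a-1) (b-1) (c-1)" by simp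
  have "subseq [a,b] [a,b,c]" "subseq [a,c] [a,b,c]" by auto
  then have ab: "subseq [a,b] w" "subseq [a,c] w" using S subseq_order.order_trans by blast+
  have "a = 0 \<longrightarrow> b \<noteq> 1 \<and> c \<noteq> 1"
  proof (intro impI)
    assume "a = 0"
    then show "b \<noteq> 1 \<and> c \<noteq> 1" using N ab by metis
  qed
  with nb show "\<not> bad a b c" using bad_unpred[of a b c] by blast
qed
fun unm :: "nat \<Rightarrow> nat list \<Rightarrow> nat list" where
  "unm c [] = []"
| "unm c (x#xs) = (if x = 0 then (if c > 0 then 1 # unm (c-1) xs else 0 # unm c xs) else Suc x # unm c xs)"

lemma map_unm: "map (\<lambda>x. x - 1) (unm c v) = v"
  by (induction c v rule: unm.induct) auto

lemma length_unm: "length (unm c v) = length v"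
  by (induction c v rule: unm.induct) auto

lemma count_unm1: "count_list (unm c v) 1 = min c (count_list v 0)"
  by (induction c v rule: unm.induct) auto

lemma count_unm0: "count_list (unm c v) 0 = count_list v 0 - c"
  by (induction c v rule: unm.induct) auto

lemma count_unmSS: "count_list (unm c v) (Suc (Suc i)) = count_list v (Suc i)"
  by (induction c v rule: unm.induct) auto

lemma set_unm: "set v \<subseteq> {0..k} \<Longrightarrow> set (unm c v) \<subseteq> {0..Suc k}"
  by (induction c v rule: unm.induct) auto

lemma one_notin_unm0: "1 \<notin> set (unm 0 v)"
  by (induction v) auto

lemma sub01_Cons: "subseq [0,1] (x#xs) \<longleftrightarrow> (x = 0 \<and> 1 \<in> set xs) \<or> subseq [0,1] (xs::nat list)"
proof (cases "x = 0")
  case True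
  then show ?thesis using subseq_singleton_left[of 1 xs] subseq_Cons'[of 0 "[1]" xs] by auto
qed auto

lemma nosub_unm: "\<not> subseq [0,1] (unm c v)"
proof (induction c v rule: unm.induct)
  case (2 c x xs)
  then show ?case using one_notin_unm0[of xs] by (auto simp: sub01_Cons subseq_singleton_left)
qed auto

lemma unm_map: "\<not> subseq [0,1] w \<Longrightarrow> count_list w 1 = c \<Longrightarrow> unm c (map (\<lambda>x. x - 1) w) = w"
proof (induction w arbitrary: c)
  case (Cons x xs)
  show ?case
  proof (cases "x = 0")
    case True
    then have "1 \<notin> set xs" "\<not> subseq [0,1] xs" using Cons.prems sub01_Cons[of x xs] by blast+
    then have "c = 0" using Cons.prems True by (simp add: count_list_0_iff)
    then show ?thesis using Cons True \<open>\<not> subseq [0,1] xs\<close> by auto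
  next
    case False
    then have "\<not> subseq [0,1] xs" using Cons.prems sub01_Cons[of x xs] by blast
    show ?thesis
    proof (cases "x = 1")
      case True
      then show ?thesis using Cons \<open>\<not> subseq [0,1] xs\<close> by auto
    next
      case False
      then show ?thesis using Cons \<open>\<not> subseq [0,1] xs\<close> \<open>x \<noteq> 0\<close> by auto
    qed
  qed
qed simp

lemma count_map_pred: "count_list (map (\<lambda>x. x - 1) w) i =
   (if i = 0 then count_list w 0 + count_list w 1 else count_list w (Suc i))"
  by (induction w) auto


lemma subseq_set: "subseq xs ys \<Longrightarrow> set xs \<subseteq> set ys"
  by (induction rule: list_emb.induct) auto

lemma count_rep: "count_list (replicate h x) y = (if x = y then h else 0)"
  by (induction h) auto

definition Q :: "nat \<Rightarrow> nat \<Rightarrow> nat \<Rightarrow> nat list set" where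
  "Q m h k = {w. length w = h + m*k \<and> set w \<subseteq> {0..k} \<and> count_list w 0 = h \<and>
      (\<forall>i\<in>{1..k}. count_list w i = m) \<and> av w}"

lemma finite_Q: "finite (Q m h k)"
proof -
  have "Q m h k \<subseteq> {w. set w \<subseteq> {0..k} \<and> length w = h + m*k}" unfolding Q_def by auto
  then show ?thesis using finite_lists_length_eq[of "{0..k}" "h + m*k"] finite_subset by blast
qed

lemma Q_base: "Q m h 0 = {replicate h 0}"
proof
  show "Q m h 0 \<subseteq> {replicate h 0}"
  proof
    fix w assume "w \<in> Q m h 0"
    then have "length w = h" "set w \<subseteq> {0}" unfolding Q_def by auto
    then show "w \<in> {replicate h 0}" by (auto intro!: replicate_eqI)
  qed
next
  have "av (replicate h 0)" unfolding av_def bad_def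
  proof (intro allI impI)
    fix a b c assume "subseq [a,b,c] (replicate h (0::nat))"
    then have "set [a,b,c] \<subseteq> set (replicate h (0::nat))"
      by (rule subseq_set)
    then have "a = 0" "b = 0" "c = 0" by (auto split: if_splits)
    then show "\<not> ((a < b \<and> b = c) \<or> (a < c \<and> c < b))" by simp
  qed
  then show "{replicate h 0} \<subseteq> Q m h 0" unfolding Q_def by (auto simp: count_rep)
qed

lemma card_Q_base: "card (Q m h 0) = 1"
  by (simp add: Q_base)

lemma merge_card: "card {w \<in> Q m h (Suc k). \<not> subseq [0,1] w} = card (Q m (h+m) k)"
proof -
  let ?g = "map (\<lambda>x::nat. x - 1)"
  let ?A = "{w \<in> Q m h (Suc k). \<not> subseq [0,1] w}"
  have inj: "inj_on ?g ?A"
  proof (rule inj_on_inverseI[of _ "unm m"])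
    fix w assume "w \<in> ?A"
    then have "\<not> subseq [0,1] w" "count_list w 1 = m" unfolding Q_def by auto
    then show "unm m (?g w) = w" by (rule unm_map)
  qed
  have "?g ` ?A = Q m (h+m) k"
  proof
    show "?g ` ?A \<subseteq> Q m (h+m) k"
    proof
      fix v assume "v \<in> ?g ` ?A"
      then obtain w where w: "w \<in> ?A" "v = ?g w" by blast
      then have w1: "length w = h + m * Suc k" "set w \<subseteq> {0..Suc k}" "count_list w 0 = h"
        "\<forall>i\<in>{1..Suc k}. count_list w i = m" "av w" unfolding Q_def by auto
      have "length v = (h+m) + m*k" using w1 w by simp
      moreover have "set v \<subseteq> {0..k}" using w1(2) w by auto
      moreover have "count_list v 0 = h + m" using w1 w count_map_pred[of w 0] by simp
      moreover have "\<forall>i\<in>{1..k}. count_list v i = m"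
      proof
        fix i assume i: "i \<in> {1..k}"
        then have "count_list v i = count_list w (Suc i)" using w count_map_pred[of w i] by simp
        then show "count_list v i = m" using w1(4) i by simp
      qed
      moreover have "av v" using w1 w av_map_pred by simp
      ultimately show "v \<in> Q m (h+m) k" unfolding Q_def by blast
    qed
  next
    show "Q m (h+m) k \<subseteq> ?g ` ?A"
    proof
      fix v assume "v \<in> Q m (h+m) k"
      then have v1: "length v = h + m + m * k" "set v \<subseteq> {0..k}" "count_list v 0 = h + m"
        "\<forall>i\<in>{1..k}. count_list v i = m" "av v" unfolding Q_def by auto
      let ?w = "unm m v"
      have "length ?w = h + m * Suc k" using v1 by (simp add: length_unm)
      moreover have "set ?w \<subseteq> {0..Suc k}" using v1 set_unm by blast
      moreover have "count_list ?w 0 = h" using v1 by (simp add: count_unm0)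
      moreover have "\<forall>i\<in>{1..Suc k}. count_list ?w i = m"
      proof
        fix i assume i: "i \<in> {1..Suc k}"
        show "count_list ?w i = m"
        proof (cases "i = 1")
          case True then show ?thesis using v1 count_unm1[of m v] by simp
        next
          case False
          then obtain j where "i = Suc (Suc j)" "Suc j \<in> {1..k}" using i
            by (metis One_nat_def atLeastAtMost_iff not0_implies_Suc Suc_le_mono le_antisym le_zero_eq not_less_eq_eq)
          then show ?thesis using v1 by (simp add: count_unmSS)
        qed
      qed
      moreover have "av ?w" using av_unmap[of ?w] map_unm[of m v] nosub_unm v1 by simp
      ultimately have "?w \<in> ?A" using nosub_unm unfolding Q_def by blast
      moreover have "v = ?g ?w" using map_unm[of m v] by simp
      ultimately show "v \<in> ?g ` ?A" by blast
    qed
  qed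
  then show ?thesis using card_image[OF inj] by simp
qed

fun ins1 :: "nat list \<Rightarrow> nat list" where
  "ins1 [] = []"
| "ins1 (x#xs) = (if x = 1 \<and> 1 \<notin> set xs then 0#1#xs else x # ins1 xs)"

lemma ins1_split: "1 \<notin> set Y \<Longrightarrow> ins1 (X@1#Y) = X@0#1#Y"
  by (induction X) auto

lemma last_split_unique: "X1@a#Y1 = X2@a#Y2 \<Longrightarrow> a \<notin> set Y1 \<Longrightarrow> a \<notin> set Y2 \<Longrightarrow> X1 = X2 \<and> Y1 = Y2"
proof (induction X1 arbitrary: X2)
  case Nil then show ?case by (cases X2) auto
next
  case (Cons x X1) then show ?case by (cases X2) auto
qed

lemma subseq_single: "subseq xs [x] \<Longrightarrow> xs = [] \<or> xs = [x]"
  by (cases xs) (auto split: if_splits dest: list_emb_Nil2)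

lemma av_ins: "av (X@1#Y) \<Longrightarrow> 1 \<notin> set Y \<Longrightarrow> av (X@0#1#Y)"
  unfolding av_def
proof (intro allI impI notI)
  fix a b c
  assume H: "\<forall>a b c. subseq [a, b, c] (X @ 1 # Y) \<longrightarrow> \<not> bad a b c" and Y: "1 \<notin> set Y"
    and S: "subseq [a,b,c] (X@0#1#Y)" and B: "bad a b c"
  from S have "subseq [a,b,c] (X @ ([0] @ (1#Y)))" by simp
  then obtain s1 s2 where E: "[a,b,c] = s1@s2" "subseq s1 X" "subseq s2 ([0] @ (1#Y))"
    by (rule subseq_appendE)
  from E(3) obtain s3 s4 where E2: "s2 = s3@s4" "subseq s3 [0]" "subseq s4 (1#Y)"
    by (rule subseq_appendE)
  from E2(2) have "s3 = [] \<or> s3 = [0]" by (rule subseq_single)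
  then show False
  proof
    assume "s3 = []"
    then have "s2 = s4" using E2 by simp
    have "subseq (s1@s4) (X@1#Y)" using list_emb_append_mono[OF E(2) E2(3)] by simp
    then have "subseq [a,b,c] (X@1#Y)" using E(1) \<open>s2 = s4\<close> by simp
    then show False using H B by blast
  next
    assume s3: "s3 = [0]"
    then have eq: "[a,b,c] = s1 @ 0 # s4" using E E2 by simp
    have "(a = 0 \<and> s4 = [b,c]) \<or> b = 0 \<or> c = 0"
    proof (cases s1)
      case Nil then show ?thesis using eq by simp
    next
      case (Cons x1 r1)
      then show ?thesis
      proof (cases r1)
        case Nil then show ?thesis using eq Cons by simp
      next
        case (Cons x2 r2)
        then show ?thesis using eq \<open>s1 = x1 # r1\<close> by (cases r2) simp_all
      qed
    qed
    moreover have "b \<noteq> 0" "c \<noteq> 0" using B unfolding bad_def by auto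
    ultimately have a0: "a = 0" and s4: "s4 = [b,c]" by auto
    then have bc: "subseq [b,c] (1#Y)" using E2 by simp
    show False
    proof (cases "b = 1")
      case True
      then have "subseq [c] Y" using bc by simp
      then have "c \<in> set Y" by (simp add: subseq_singleton_left)
      then have "c \<noteq> 1" using Y by auto
      then show False using B a0 True unfolding bad_def by auto
    next
      case False
      then have "subseq [b,c] Y" using bc by simp
      then have "subseq [b,c] Y" "c \<in> set Y" using subseq_set[of "[b,c]" Y] by auto
      then have c1: "c \<noteq> 1" using Y by auto
      have b1: "bad 1 b c" using B a0 False c1 \<open>b \<noteq> 0\<close> \<open>c \<noteq> 0\<close> unfolding bad_def by auto
      have "subseq [1,b,c] (1#Y)" using \<open>subseq [b,c] Y\<close> by simp
      then have "subseq [1,b,c] (X@1#Y)" by (rule subseq_drop_many)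
      then show False using H b1 by blast
    qed
  qed
qed

lemma struct0:
  assumes A: "av (X@1#Y)" and Y: "1 \<notin> set Y" and S: "subseq [0,1] (X@1#Y)"
  shows "\<exists>X'. X = X'@[0]"
proof -
  from S obtain s1 s2 where E: "[0,1] = s1@s2" "subseq s1 X" "subseq s2 (1#Y)"
    by (rule subseq_appendE)
  have "0 \<in> set X"
  proof (cases s1)
    case Nil
    then have "subseq [0,1] (1#Y)" using E by simp
    then have "subseq [0,1] Y" by simp
    then have "1 \<in> set Y" using subseq_set by fastforce
    then show ?thesis using Y by simp
  next
    case (Cons x r)
    then have "x = 0" using E by simp
    then have "0 \<in> set s1" using Cons by simp
    then show ?thesis using subseq_set[OF E(2)] by blast
  qed
  then have "X \<noteq> []" by auto
  then obtain X0 c where X: "X = X0 @ [c]" by (metis rev_exhaust)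
  show ?thesis
  proof (cases "c = 0")
    case True then show ?thesis using X by blast
  next
    case False
    then have "0 \<in> set X0" using \<open>0 \<in> set X\<close> X by auto
    then have "subseq [0] X0" by (simp add: subseq_singleton_left)
    moreover have "subseq [c,1] ([c]@1#Y)" by simp
    ultimately have "subseq ([0]@[c,1]) (X0 @ ([c]@1#Y))" by (rule list_emb_append_mono)
    then have "subseq [0,c,1] (X@1#Y)" using X by simp
    moreover have "bad 0 c 1" using False unfolding bad_def by auto
    ultimately show ?thesis using A unfolding av_def by blast
  qed
qed

lemma one_in_Q: "m \<ge> 1 \<Longrightarrow> v \<in> Q m h (Suc k) \<Longrightarrow> 1 \<in> set v"
  unfolding Q_def using count_list_0_iff[of v 1] by force

lemma ins_card:
  assumes m: "m \<ge> 1"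
  shows "card {w \<in> Q m (Suc h) (Suc k). subseq [0,1] w} = card (Q m h (Suc k))"
proof -
  let ?B = "{w \<in> Q m (Suc h) (Suc k). subseq [0,1] w}"
  have inj: "inj_on ins1 (Q m h (Suc k))"
  proof
    fix v1 v2 assume v1: "v1 \<in> Q m h (Suc k)" and v2: "v2 \<in> Q m h (Suc k)" and e: "ins1 v1 = ins1 v2"
    obtain X1 Y1 where d1: "v1 = X1@1#Y1" "1 \<notin> set Y1" using split_list_last[OF one_in_Q[OF m v1]] by auto
    obtain X2 Y2 where d2: "v2 = X2@1#Y2" "1 \<notin> set Y2" using split_list_last[OF one_in_Q[OF m v2]] by auto
    have "(X1@[0])@1#Y1 = (X2@[0])@1#Y2" using e d1 d2 ins1_split by simp
    from last_split_unique[OF this d1(2) d2(2)] have "X1@[0] = X2@[0]" "Y1 = Y2" by auto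
    then show "v1 = v2" using d1 d2 by simp
  qed
  have "ins1 ` Q m h (Suc k) = ?B"
  proof
    show "ins1 ` Q m h (Suc k) \<subseteq> ?B"
    proof
      fix w assume "w \<in> ins1 ` Q m h (Suc k)"
      then obtain v where v: "v \<in> Q m h (Suc k)" "w = ins1 v" by auto
      obtain X Y where d: "v = X@1#Y" "1 \<notin> set Y" using split_list_last[OF one_in_Q[OF m v(1)]] by auto
      have w: "w = X@0#1#Y" using v d ins1_split by simp
      from v(1) have v1: "length v = h + m * Suc k" "set v \<subseteq> {0..Suc k}" "count_list v 0 = h"
        "\<forall>i\<in>{1..Suc k}. count_list v i = m" "av v" unfolding Q_def by auto
      have "length w = Suc h + m * Suc k" using v1 d w by simp
      moreover have "set w = insert 0 (set v)" using d w by auto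
      then have "set w \<subseteq> {0..Suc k}" using v1(2) by simp
      moreover have "count_list w 0 = Suc h" using v1 d w by simp
      moreover have "\<forall>i\<in>{1..Suc k}. count_list w i = m"
      proof
        fix i assume i: "i \<in> {1..Suc k}"
        then have "count_list w i = count_list v i" using d w by simp
        then show "count_list w i = m" using v1(4) i by simp
      qed
      moreover have "av w" using av_ins[of X Y] v1(5) d w by simp
      moreover have "subseq [0,1] w"
      proof -
        have "subseq [0,1] (0#1#Y)" by simp
        then have "subseq [0,1] (X@(0#1#Y))" by (rule subseq_drop_many)
        then show ?thesis using w by simp
      qed
      ultimately show "w \<in> ?B" unfolding Q_def by blast
    qed
  next
    show "?B \<subseteq> ins1 ` Q m h (Suc k)"
    proof
      fix w assume wB: "w \<in> ?B"
      then have w1: "length w = Suc h + m * Suc k" "set w \<subseteq> {0..Suc k}" "count_list w 0 = Suc h"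
        "\<forall>i\<in>{1..Suc k}. count_list w i = m" "av w" "subseq [0,1] w" unfolding Q_def by auto
      have "1 \<in> set w" using subseq_set[OF w1(6)] by auto
      then obtain X Y where d: "w = X@1#Y" "1 \<notin> set Y" using split_list_last[of 1 w] by auto
      have "\<exists>X'. X = X'@[0]" using struct0[of X Y] w1(5) w1(6) d by simp
      then obtain X' where X: "X = X'@[0]" by auto
      let ?v = "X'@1#Y"
      have wv: "w = X'@0#1#Y" using d X by simp
      have "length ?v = h + m * Suc k" using w1 wv by simp
      moreover have "set ?v \<subseteq> set w" using wv by auto
      then have "set ?v \<subseteq> {0..Suc k}" using w1(2) by (rule subset_trans)
      moreover have "count_list ?v 0 = h" using w1 wv by simp
      moreover have "\<forall>i\<in>{1..Suc k}. count_list ?v i = m"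
      proof
        fix i assume i: "i \<in> {1..Suc k}"
        then have "count_list w i = count_list ?v i" using wv by simp
        then show "count_list ?v i = m" using w1(4) i by simp
      qed
      moreover have "av ?v"
      proof -
        have "subseq (1#Y) (0#1#Y)" by simp
        then have "subseq (X'@1#Y) (X'@0#1#Y)" by (rule list_emb_append_mono[OF subseq_order.order_refl])
        then show ?thesis using av_subseq w1(5) wv by simp
      qed
      ultimately have "?v \<in> Q m h (Suc k)" unfolding Q_def by blast
      moreover have "ins1 ?v = w" using ins1_split d(2) wv by simp
      ultimately show "w \<in> ins1 ` Q m h (Suc k)" by blast
    qed
  qed
  then show ?thesis using card_image[OF inj] by simp
qed

lemma Q_rec:
  assumes m: "m \<ge> 1"
  shows "card (Q m h (Suc k)) = (if h = 0 then 0 else card (Q m (h-1) (Suc k))) + card (Q m (h+m) k)"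
proof -
  let ?A = "{w \<in> Q m h (Suc k). \<not> subseq [0,1] w}"
  let ?B = "{w \<in> Q m h (Suc k). subseq [0,1] w}"
  have U: "Q m h (Suc k) = ?A \<union> ?B" by auto
  have fA: "finite ?A" by (rule finite_subset[OF _ finite_Q[of m h "Suc k"]]) blast
  have fB: "finite ?B" by (rule finite_subset[OF _ finite_Q[of m h "Suc k"]]) blast
  have c: "card (?A \<union> ?B) = card ?A + card ?B"
    by (rule card_Un_disjoint[OF fA fB]) blast
  have "card (Q m h (Suc k)) = card ?A + card ?B"
    using c by (simp only: U[symmetric])
  moreover have "card ?B = (if h = 0 then 0 else card (Q m (h-1) (Suc k)))"
  proof (cases h)
    case 0
    have "?B = {}"
    proof (rule ccontr)
      assume "?B \<noteq> {}"
      then obtain w where w: "w \<in> Q m h (Suc k)" "subseq [0,1] w" by blast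
      then have "0 \<in> set w" using subseq_set[OF w(2)] by simp
      moreover have "count_list w 0 = 0" using w 0 unfolding Q_def by auto
      ultimately show False by (simp add: count_list_0_iff)
    qed
    then have "card ?B = 0" by (metis card.empty)
    then show ?thesis using 0 by simp
  next
    case (Suc h')
    then show ?thesis using ins_card[OF m, of h' k] by simp
  qed
  ultimately show ?thesis using merge_card[of m h k] by simp
qed

lemma alg:
  fixes T A B C2 h k m M :: real
  assumes M: "M = (m+1)*(k+1)+h" and F1: "T*M = h*A + (h+m+1)*B" and F2: "C2 = B + A"
    and F3: "(M+1)*B = C2*(k+1)" and Mp: "M > 0" and kp: "k \<ge> 0"
  shows "T*(M+1) = (h+1)*C2"
proof -
  have kA: "(k+1)*A = (M-k)*B" using F2 F3 by (simp add: algebra_simps)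
  have "T*M*(k+1) = h*((k+1)*A) + (k+1)*(h+m+1)*B" using F1 by (simp add: algebra_simps)
  also have "\<dots> = h*((M-k)*B) + (k+1)*(h+m+1)*B" using kA by simp
  also have "\<dots> = (h+1)*M*B" using M by (simp add: algebra_simps)
  finally have "T*(k+1)*M = ((h+1)*B)*M" by (simp add: algebra_simps)
  then have e1: "T*(k+1) = (h+1)*B" using Mp by simp
  have "T*(M+1)*(k+1) = (h+1)*((M+1)*B)" using e1 by (simp add: algebra_simps)
  also have "\<dots> = ((h+1)*C2)*(k+1)" using F3 by (simp add: algebra_simps)
  finally show ?thesis using kp by simp
qed

lemma Q_formula:
  assumes m: "m \<ge> 1"
  shows "real (card (Q m h k)) * real ((m+1)*k+h+1) = real (h+1) * real (((m+1)*k+h+1) choose k)"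
proof (induction k arbitrary: h)
  case 0
  then show ?case by (simp add: card_Q_base)
next
  case (Suc k)
  note outer = Suc.IH
  show ?case
  proof (induction h)
    case 0
    have IH: "real (card (Q m m k)) * real ((m+1)*k+m+1) = real (m+1) * real (((m+1)*k+m+1) choose k)"
      using outer[of m] by simp
    define M where "M = (m+1)*(Suc k) + 0"
    have T: "card (Q m 0 (Suc k)) = card (Q m m k)" using Q_rec[OF m, of 0 k] by simp
    have F1: "real (card (Q m 0 (Suc k))) * real M = real 0 * real (M choose Suc k) + (real 0 + real m + 1) * real (M choose k)"
      using IH T unfolding M_def by (simp add: algebra_simps)
    have Mn: "M > 0" unfolding M_def by simp
    then have Mp: "real M > 0" by simp
    have F2: "real (Suc M choose Suc k) = real (M choose k) + real (M choose Suc k)" by simp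
    have F3: "(real M + 1) * real (M choose k) = real (Suc M choose Suc k) * (real k + 1)"
      using Suc_times_binomial_eq[of M k] by (metis of_nat_Suc of_nat_mult add.commute)
    have "real (card (Q m 0 (Suc k))) * (real M + 1) = (real 0 + 1) * real (Suc M choose Suc k)"
      by (rule alg[OF _ F1 F2 F3 Mp]) (simp_all add: M_def algebra_simps)
    then show ?case unfolding M_def by (simp add: algebra_simps)
  next
    case (Suc h)
    define M where "M = (m+1)*(Suc k) + Suc h"
    have IH1: "real (card (Q m h (Suc k))) * real M = real (Suc h) * real (M choose Suc k)"
      using Suc.IH unfolding M_def by (simp add: algebra_simps)
    have IH2: "real (card (Q m (Suc h + m) k)) * real M = real (Suc h + m + 1) * real (M choose k)"
      using outer[of "Suc h + m"] unfolding M_def by (simp add: algebra_simps)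
    have T: "card (Q m (Suc h) (Suc k)) = card (Q m h (Suc k)) + card (Q m (Suc h + m) k)"
      using Q_rec[OF m, of "Suc h" k] by simp
    have F1: "real (card (Q m (Suc h) (Suc k))) * real M = real (Suc h) * real (M choose Suc k) + (real (Suc h) + real m + 1) * real (M choose k)"
      using IH1 IH2 T by (simp add: algebra_simps)
    have Mn: "M > 0" unfolding M_def by simp
    then have Mp: "real M > 0" by simp
    have F2: "real (Suc M choose Suc k) = real (M choose k) + real (M choose Suc k)" by simp
    have F3: "(real M + 1) * real (M choose k) = real (Suc M choose Suc k) * (real k + 1)"
      using Suc_times_binomial_eq[of M k] by (metis of_nat_Suc of_nat_mult add.commute)
    have "real (card (Q m (Suc h) (Suc k))) * (real M + 1) = (real (Suc h) + 1) * real (Suc M choose Suc k)"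
      by (rule alg[OF _ F1 F2 F3 Mp]) (simp_all add: M_def algebra_simps)
    then show ?case unfolding M_def by (simp add: algebra_simps)
  qed
qed

lemma set_1n: "set x \<subseteq> {1..n} \<longleftrightarrow> set x \<subseteq> {0..n} \<and> 0 \<notin> set (x::nat list)"
proof
  assume "set x \<subseteq> {1..n}" then show "set x \<subseteq> {0..n} \<and> 0 \<notin> set x" by auto
next
  assume H: "set x \<subseteq> {0..n} \<and> 0 \<notin> set x"
  show "set x \<subseteq> {1..n}"
  proof
    fix y assume "y \<in> set x"
    then have "y \<le> n" using H by auto
    moreover have "y \<noteq> 0" using H \<open>y \<in> set x\<close> by metis
    ultimately show "y \<in> {1..n}" by simp
  qed
qed

lemma s_count_Q: "s_count n m {[1,2,2],[1,3,2]} = card (Q m 0 n)"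
proof -
  have "{w \<in> multiperms n m. avoids_all w {[1,2,2],[1,3,2]}} = Q m 0 n"
  proof (rule set_eqI)
    fix w
    have "w \<in> multiperms n m \<longleftrightarrow> length w = 0 + m*n \<and> set w \<subseteq> {0..n} \<and> count_list w 0 = 0 \<and> (\<forall>i\<in>{1..n}. count_list w i = m)"
      unfolding multiperms_def set_1n by (simp add: count_list_0_iff mult.commute conj_ac)
    then show "w \<in> {w \<in> multiperms n m. avoids_all w {[1,2,2],[1,3,2]}} \<longleftrightarrow> w \<in> Q m 0 n"
      unfolding Q_def av_iff by blast
  qed
  then show ?thesis unfolding s_count_def by simp
qed

theorem mainTheorem8:
  fixes n m :: nat
  assumes "m \<ge> 1"
  shows "real (s_count n m {[1,2,2], [1,3,2]}) =
           1 / (real (m * n) + 1) * real (((m + 1) * n) choose n)"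
proof -
  define N where "N = (m+1)*n"
  have e: "real (card (Q m 0 n)) * real (Suc N) = real (Suc N choose n)"
    using Q_formula[OF assms, of 0 n] unfolding N_def by simp
  have b: "(Suc N - n) * (Suc N choose n) = Suc N * (N choose n)"
    using binomial_absorb_comp[of "Suc N" n] by simp
  have sn: "Suc N - n = m*n + 1" unfolding N_def by simp
  have "real (card (Q m 0 n)) * real (Suc N) * real (m*n+1) = real (Suc N) * real (N choose n)"
    using e b sn by (metis of_nat_mult mult.commute)
  then have "(real (card (Q m 0 n)) * real (m*n+1)) * real (Suc N) = real (N choose n) * real (Suc N)"
    by (simp only: mult_ac)
  then have "real (card (Q m 0 n)) * real (m*n+1) = real (N choose n)"
    using mult_right_cancel[of "real (Suc N)" "real (card (Q m 0 n)) * real (m*n+1)" "real (N choose n)"]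
    by simp
  moreover have "(0::nat) < m*n+1" by simp
  then have "(0::real) < real (m*n+1)" by (simp only: of_nat_0_less_iff)
  then have pos: "real (m*n+1) \<noteq> 0" by linarith
  ultimately have "real (card (Q m 0 n)) = real (N choose n) / real (m*n+1)"
    by (simp only: eq_divide_eq if_True not_False_eq_True refl)
  then have "real (card (Q m 0 n)) = 1 / (real (m * n) + 1) * real (N choose n)"
    by simp
  then show ?thesis using s_count_Q[of n m] unfolding N_def by simp
qed

end
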